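(* For $n\ge 3$ and every $i\in\{1,\dots,n\}$, $P_n(x_1,\dots,x_{i-1},1,x_{i+1},\dots,x_n)=C_{n-1}(x_1,\dots,x_{i-1},x_{i+1},\dots,x_n)=P_{n-1}(x_1,\dots,x_{i-1},x_{i+1},\dots,x_n)^2$.
   Context: Let $x_1,\dots,x_n$ be algebraically independent indeterminates over $\mathbb{Q}$; in an algebraic closure fix $y_j$ with $y_j^2=1-x_j^2$. For indices $i_1<\dots<i_m$, $\mathrm{EC}_m(x_{i_1},\dots,x_{i_m})=\sum_{S\subseteq\{i_1,\dots,i_m\},\ |S|\text{ even}}(-1)^{|S|/2}\prod_{j\in S}y_j\prod_{j\notin S}x_j$. For $k\ge 1$, $C_k(x_1,\dots,x_k)=\prod_{\sigma\in G_k}(\sigma(\mathrm{EC}_k(x_1,\dots,x_k))-1)$, where $G_k$ is the Galois group of $\mathbb{Q}(x_1,\dots,x_k,\ y_iy_j:1\le i<j\le k)$ over $\mathbb{Q}(x_1,\dots,x_k)$. $P_1=x_1-1$ and for $k\ge 2$, $P_k(x_1,\dots,x_k)=\prod_{\sigma\in G_{k-1}}(x_k-\sigma(\mathrm{EC}_{k-1}(x_1,\dots,x_{k-1})))$; these are polynomials with rational coefficients, and by the same formulas they are evaluated at any list of variables (renaming $x_j,y_j$ accordingly). *)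

theory Defs
  imports Complex_Main
begin

text \<open>Polynomials with rational coefficients in several variables are rendered as
  the complex polynomial functions they induce (an identity of rational polynomials
  holds iff the induced functions on complex points agree).  A list xs of length m
  is the point (x_1,...,x_m); the auxiliary y_j is a fixed square root of 1 - x_j^2.\<close>

definition ysq :: "complex \<Rightarrow> complex" where
  "ysq x = csqrt (1 - x^2)"

text \<open>EC_m with arbitrary values ys j substituted for y_{j+1} (0-based indexing).\<close>
definition EC_gen :: "(nat \<Rightarrow> complex) \<Rightarrow> complex list \<Rightarrow> complex" where
  "EC_gen ys xs =
     (\<Sum>S\<in>{S. S \<subseteq> {..<length xs} \<and> even (card S)}.
        (-1) ^ (card S div 2) * (\<Prod>j\<in>S. ys j) * (\<Prod>j\<in>{..<length xs} - S. xs ! j))"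

definition EC :: "complex list \<Rightarrow> complex" where
  "EC xs = EC_gen (\<lambda>j. ysq (xs ! j)) xs"

text \<open>The Galois group G_k of Q(x_1..x_k, y_i y_j) over Q(x_1..x_k) acts by
  y_j \<mapsto> e_j y_j for sign vectors e in {1,-1}^k, with e and -e giving the same
  automorphism.  We index G_k by the representatives with e_0 = 1 (one per
  automorphism; for k = 1 this is the trivial group).\<close>
definition galois_signs :: "nat \<Rightarrow> (nat \<Rightarrow> complex) set" where
  "galois_signs k = {e. e 0 = 1 \<and> (\<forall>j. e j = 1 \<or> e j = -1) \<and> (\<forall>j\<ge>k. e j = 1)}"

text \<open>sigma(EC_k(xs)) for the automorphism sigma represented by e.\<close>
definition EC_act :: "(nat \<Rightarrow> complex) \<Rightarrow> complex list \<Rightarrow> complex" where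
  "EC_act e xs = EC_gen (\<lambda>j. e j * ysq (xs ! j)) xs"

definition C :: "complex list \<Rightarrow> complex" where
  "C xs = (\<Prod>e\<in>galois_signs (length xs). EC_act e xs - 1)"

definition P :: "complex list \<Rightarrow> complex" where
  "P xs = (if length xs = 1 then xs ! 0 - 1
           else (\<Prod>e\<in>galois_signs (length xs - 1). last xs - EC_act e (butlast xs)))"

end

theory Submission imports Defs begin

lemma ii_coef: "(\<i> ^ c + (-\<i>) ^ c) / 2 = (if even c then (-1) ^ (c div 2) else (0::complex))"
proof (cases "even c")
  case True
  then obtain d where c: "c = 2*d" by blast
  have "\<i> ^ c = (-1)^d" "(-\<i>)^c = (-1)^d" unfolding c power_mult by simp_all
  then show ?thesis using True c by simp
next
  case False
  have "(-\<i>)^c = - (\<i>^c)" using False by (simp add: power_minus_odd)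
  then show ?thesis using False by simp
qed

lemma EC_gen_eq:
  "EC_gen ys xs = ((\<Prod>j<length xs. xs!j + \<i>*ys j) + (\<Prod>j<length xs. xs!j - \<i>*ys j))/2"
proof -
  define A where "A = {..<length xs}"
  have fA: "finite A" by (simp add: A_def)
  have e1: "(\<Prod>j\<in>A. xs!j + \<i>*ys j) = (\<Sum>B\<in>Pow A. \<i>^card B * (\<Prod>j\<in>B. ys j) * (\<Prod>j\<in>A-B. xs!j))"
  proof -
    have "(\<Prod>j\<in>A. xs!j + \<i>*ys j) = (\<Prod>j\<in>A. \<i>*ys j + xs!j)" by (simp add: add.commute)
    also have "\<dots> = (\<Sum>B\<in>Pow A. (\<Prod>j\<in>B. \<i>*ys j) * (\<Prod>j\<in>A-B. xs!j))" by (rule prod_add[OF fA])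
    also have "\<dots> = (\<Sum>B\<in>Pow A. \<i>^card B * (\<Prod>j\<in>B. ys j) * (\<Prod>j\<in>A-B. xs!j))"
      by (simp add: prod.distrib)
    finally show ?thesis .
  qed
  have e2: "(\<Prod>j\<in>A. xs!j - \<i>*ys j) = (\<Sum>B\<in>Pow A. (-\<i>)^card B * (\<Prod>j\<in>B. ys j) * (\<Prod>j\<in>A-B. xs!j))"
  proof -
    have "(\<Prod>j\<in>A. xs!j - \<i>*ys j) = (\<Prod>j\<in>A. (-\<i>)*ys j + xs!j)" by (simp add: add.commute)
    also have "\<dots> = (\<Sum>B\<in>Pow A. (\<Prod>j\<in>B. (-\<i>)*ys j) * (\<Prod>j\<in>A-B. xs!j))" by (rule prod_add[OF fA])
    also have "\<dots> = (\<Sum>B\<in>Pow A. (-\<i>)^card B * (\<Prod>j\<in>B. ys j) * (\<Prod>j\<in>A-B. xs!j))"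
    proof (rule sum.cong)
      fix B
      have "(\<Prod>j\<in>B. (-\<i>)*ys j) = (-\<i>)^card B * (\<Prod>j\<in>B. ys j)"
        by (simp only: prod.distrib prod_constant)
      then show "(\<Prod>j\<in>B. (-\<i>)*ys j) * (\<Prod>j\<in>A-B. xs!j) = (-\<i>)^card B * (\<Prod>j\<in>B. ys j) * (\<Prod>j\<in>A-B. xs!j)" by simp
    qed simp
    finally show ?thesis .
  qed
  have "((\<Prod>j\<in>A. xs!j + \<i>*ys j) + (\<Prod>j\<in>A. xs!j - \<i>*ys j))/2
     = (\<Sum>B\<in>Pow A. ((\<i>^card B + (-\<i>)^card B)/2) * ((\<Prod>j\<in>B. ys j) * (\<Prod>j\<in>A-B. xs!j)))"
    unfolding e1 e2 sum.distrib[symmetric] sum_divide_distrib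
    by (rule sum.cong) (auto simp: field_simps)
  also have "\<dots> = (\<Sum>B\<in>Pow A. if even (card B) then (-1) ^ (card B div 2) * (\<Prod>j\<in>B. ys j) * (\<Prod>j\<in>A-B. xs!j) else 0)"
    unfolding ii_coef by (rule sum.cong) auto
  also have "\<dots> = (\<Sum>B\<in>{B\<in>Pow A. even (card B)}. (-1) ^ (card B div 2) * (\<Prod>j\<in>B. ys j) * (\<Prod>j\<in>A-B. xs!j))"
    by (rule sum.inter_filter[symmetric]) (simp add: fA)
  also have "\<dots> = EC_gen ys xs" unfolding EC_gen_def A_def by (rule sum.cong) auto
  finally show ?thesis unfolding A_def by simp
qed

definition Zr :: "(nat \<Rightarrow> complex) \<Rightarrow> complex list \<Rightarrow> complex" where
  "Zr e xs = (\<Prod>j<length xs. xs!j + \<i> * e j * ysq (xs!j))"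

definition ff :: "complex \<Rightarrow> complex" where
  "ff z = (z + inverse z) / 2"

lemma ysq_sq: "(ysq x)^2 = 1 - x^2"
  by (simp add: ysq_def)

lemma fac_inv:
  assumes "s = 1 \<or> s = -1"
  shows "(x + \<i> * s * ysq x) * (x - \<i> * s * ysq x) = 1"
proof -
  have "(x + \<i> * s * ysq x) * (x - \<i> * s * ysq x) = x^2 + s^2 * (ysq x)^2"
    by (simp add: algebra_simps power2_eq_square)
  also have "\<dots> = 1" using assms by (auto simp: ysq_sq)
  finally show ?thesis .
qed

lemma fac_inv': "s = 1 \<or> s = -1 \<Longrightarrow> x - \<i> * s * ysq x = inverse (x + \<i> * s * ysq x)"
  using fac_inv[of s x] by (metis inverse_unique mult.commute)

lemma fac_nz: "s = 1 \<or> s = -1 \<Longrightarrow> x + \<i> * s * ysq x \<noteq> 0"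
  using fac_inv[of s x] by auto

lemma Zr_nz: "\<forall>j. e j = 1 \<or> e j = -1 \<Longrightarrow> Zr e xs \<noteq> 0"
proof -
  assume a: "\<forall>j. e j = 1 \<or> e j = -1"
  have "\<forall>j\<in>{..<length xs}. xs!j + \<i> * e j * ysq (xs!j) \<noteq> 0" using a fac_nz by blast
  then show ?thesis unfolding Zr_def by (simp add: prod_zero_iff)
qed

lemma EC_act_eq:
  assumes "\<forall>j. e j = 1 \<or> e j = -1"
  shows "EC_act e xs = ff (Zr e xs)"
proof -
  have "(\<Prod>j<length xs. xs!j - \<i>*(e j * ysq (xs!j))) = (\<Prod>j<length xs. inverse (xs!j + \<i> * e j * ysq (xs!j)))"
  proof (rule prod.cong)
    fix j have "e j = 1 \<or> e j = -1" using assms by blast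
    from fac_inv'[OF this, of "xs!j"]
    show "xs!j - \<i>*(e j * ysq (xs!j)) = inverse (xs!j + \<i> * e j * ysq (xs!j))" by (simp add: mult.assoc)
  qed simp
  also have "\<dots> = inverse (Zr e xs)" unfolding Zr_def using prod_inversef[of "\<lambda>j. xs!j + \<i> * e j * ysq (xs!j)"]
    by (simp add: o_def)
  finally show ?thesis unfolding EC_act_def EC_gen_eq ff_def Zr_def by (simp add: mult.assoc)
qed

lemma Zr_cong: "(\<And>j. j < length xs \<Longrightarrow> e j = e' j) \<Longrightarrow> Zr e xs = Zr e' xs"
  unfolding Zr_def by (rule prod.cong) auto

lemma Zr_snoc: "Zr e (xs @ [c]) = Zr e xs * (c + \<i> * e (length xs) * ysq c)"
  unfolding Zr_def by (simp add: nth_append)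

lemma Zr_snoc_upd: "Zr (e(length xs := s)) (xs @ [c]) = Zr e xs * (c + \<i> * s * ysq c)"
  unfolding Zr_snoc by (simp add: Zr_cong[of xs "e(length xs := s)" e])

lemma G_0: "galois_signs 0 = {\<lambda>_. 1}"
  unfolding galois_signs_def by auto

lemma G_1: "galois_signs (Suc 0) = {\<lambda>_. 1}"
proof
  show "{\<lambda>_. 1} \<subseteq> galois_signs (Suc 0)" unfolding galois_signs_def by auto
  show "galois_signs (Suc 0) \<subseteq> {\<lambda>_. 1}"
  proof
    fix e assume e: "e \<in> galois_signs (Suc 0)"
    have "e j = 1" for j
      using e unfolding galois_signs_def by (cases j) auto
    then show "e \<in> {\<lambda>_. 1}" by auto
  qed
qed

lemma G_sg: "e \<in> galois_signs k \<Longrightarrow> \<forall>j. e j = 1 \<or> e j = -1"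
  unfolding galois_signs_def by auto

lemma G_split:
  assumes "k \<ge> 1"
  shows "galois_signs (Suc k) = (\<lambda>e. e(k:=1)) ` galois_signs k \<union> (\<lambda>e. e(k:=-1)) ` galois_signs k"
proof
  show "galois_signs (Suc k) \<subseteq> (\<lambda>e. e(k:=1)) ` galois_signs k \<union> (\<lambda>e. e(k:=-1)) ` galois_signs k"
  proof
    fix e assume e: "e \<in> galois_signs (Suc k)"
    have m: "e(k:=1) \<in> galois_signs k"
    proof -
      have "e j = 1" if "j \<ge> Suc k" for j using e that unfolding galois_signs_def by auto
      then have "\<forall>j\<ge>k. (e(k:=1)) j = 1" by (metis fun_upd_apply le_neq_implies_less Suc_leI)
      moreover have "(e(k:=1)) 0 = 1" using e assms unfolding galois_signs_def by auto
      moreover have "\<forall>j. (e(k:=1)) j = 1 \<or> (e(k:=1)) j = -1" using e unfolding galois_signs_def by auto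
      ultimately show ?thesis unfolding galois_signs_def by blast
    qed
    have "e k = 1 \<or> e k = -1" using e unfolding galois_signs_def by auto
    then show "e \<in> (\<lambda>e. e(k:=1)) ` galois_signs k \<union> (\<lambda>e. e(k:=-1)) ` galois_signs k"
    proof
      assume "e k = 1" then have "e = (e(k:=1))(k:=1)" by auto
      then show ?thesis using m by blast
    next
      assume "e k = -1" then have "e = (e(k:=1))(k:=-1)" by auto
      then show ?thesis using m by blast
    qed
  qed
next
  show "(\<lambda>e. e(k:=1)) ` galois_signs k \<union> (\<lambda>e. e(k:=-1)) ` galois_signs k \<subseteq> galois_signs (Suc k)"
    using assms unfolding galois_signs_def by (auto simp: Suc_le_eq) (metis order.order_iff_strict)+
qed

lemma G_fin: "finite (galois_signs k)"
proof (induction k)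
  case 0 then show ?case by (simp add: G_0)
next
  case (Suc k) then show ?case
    by (cases "k = 0") (simp_all add: G_1 G_split)
qed

lemma G_prod_split:
  assumes "k \<ge> 1"
  shows "(\<Prod>e\<in>galois_signs (Suc k). g e) = (\<Prod>e\<in>galois_signs k. g (e(k:=1)) * g (e(k:=-1)))"
proof -
  have ev: "e k = 1" if "e \<in> galois_signs k" for e using that unfolding galois_signs_def by auto
  have i1: "inj_on (\<lambda>e. e(k:=1)) (galois_signs k)"
    by (rule inj_onI) (metis ev fun_upd_triv)
  have i2: "inj_on (\<lambda>e. e(k:=-1)) (galois_signs k)"
    by (rule inj_onI) (metis ev fun_upd_triv fun_upd_upd)
  have d: "(\<lambda>e. e(k:=1)) ` galois_signs k \<inter> (\<lambda>e. e(k:=-1)) ` galois_signs k = {}"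
    by (auto dest: fun_cong[of _ _ k])
  show ?thesis
    unfolding G_split[OF assms]
    by (subst prod.union_disjoint) (simp_all add: G_fin d prod.reindex i1 i2 prod.distrib)
qed

lemma ff_w: "ff (c + \<i> * 1 * ysq c) = c"
proof -
  have "inverse (c + \<i> * 1 * ysq c) = c - \<i> * 1 * ysq c" using fac_inv'[of 1 c] by simp
  then show ?thesis unfolding ff_def by simp
qed

lemma key_id:
  assumes "A \<noteq> 0" "W \<noteq> 0"
  shows "(ff (A*W) - 1) * (ff (A * inverse W) - 1) = (ff W - ff A)^2"
proof -
  have 1: "ff (A*W) - 1 = (A*W-1)^2/(2*A*W)" using assms unfolding ff_def
    by (simp add: field_simps power2_eq_square)
  have 2: "ff (A*inverse W) - 1 = (A-W)^2/(2*A*W)" using assms unfolding ff_def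
    by (simp add: field_simps power2_eq_square)
  have 3: "ff W - ff A = (W-A)*(A*W-1)/(2*A*W)" using assms unfolding ff_def
    by (simp add: field_simps power2_eq_square)
  show ?thesis unfolding 1 2 3 using assms by (simp add: field_simps power2_eq_square)
qed

definition ww :: "complex \<Rightarrow> complex" where "ww c = c + \<i> * 1 * ysq c"

lemma ww_nz: "ww c \<noteq> 0" unfolding ww_def by (rule fac_nz) simp

lemma ww_neg: "c + \<i> * (-1) * ysq c = inverse (ww c)"
  using fac_inv'[of 1 c] unfolding ww_def by simp

lemma ww_1: "ww 1 = 1" unfolding ww_def ysq_def by simp

lemma snoc_prod:
  assumes "length ds \<ge> 1"
  shows "(\<Prod>e\<in>galois_signs (Suc (length ds)). g (Zr e (ds @ [c])))
       = (\<Prod>e\<in>galois_signs (length ds). g (Zr e ds * ww c) * g (Zr e ds * inverse (ww c)))"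
  unfolding G_prod_split[OF assms] Zr_snoc_upd ww_neg ww_def by simp

lemma ff_ww: "ff (ww c) = c" unfolding ww_def by (rule ff_w)

lemma Zr_1: "Zr e [1] = 1" unfolding Zr_def ysq_def by simp

lemma remove_lemma:
  assumes "\<And>z. z \<noteq> 0 \<Longrightarrow> H (inverse z) = H z" "2 \<le> length bs" "i < length bs"
  shows "(\<Prod>e\<in>galois_signs (length bs). H (Zr e (bs[i:=1])))
       = (\<Prod>e\<in>galois_signs (length bs - 1). H (Zr e (take i bs @ drop (Suc i) bs)))^2"
  using assms
proof (induction bs arbitrary: H i rule: rev_induct)
  case Nil then show ?case by simp
next
  case (snoc c cs)
  define k where "k = length cs"
  have k1: "k \<ge> 1" using snoc.prems(2) unfolding k_def by simp
  have Gk: "galois_signs (length (cs @ [c])) = galois_signs (Suc (length cs))" by simp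
  show ?case
  proof (cases "i = k")
    case True
    have u: "(cs @ [c])[i := 1] = cs @ [1]" using True k_def by simp
    have r: "take i (cs @ [c]) @ drop (Suc i) (cs @ [c]) = cs" using True k_def by simp
    show ?thesis unfolding u r Gk snoc_prod[OF k1[unfolded k_def]] ww_1
      by (simp add: power2_eq_square prod.distrib)
  next
    case False
    then have ik: "i < k" using snoc.prems(3) k_def by simp
    have u: "(cs @ [c])[i := 1] = cs[i:=1] @ [c]" using ik k_def by (simp add: list_update_append)
    have r: "take i (cs @ [c]) @ drop (Suc i) (cs @ [c]) = (take i cs @ drop (Suc i) cs) @ [c]"
      using ik k_def by simp
    show ?thesis
    proof (cases "k = 1")
      case True
      then obtain a where cs: "cs = [a]" using k_def by (cases cs) auto
      have i0: "i = 0" using ik True by simp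
      have "(\<Prod>e\<in>galois_signs (length (cs @ [c])). H (Zr e ((cs @ [c])[i := 1])))
          = H (ww c) * H (inverse (ww c))"
      proof -
        have u': "(cs @ [c])[i := 1] = [1] @ [c]" using cs i0 by simp
        have g': "galois_signs (length (cs @ [c])) = galois_signs (Suc (length [1::complex]))" using cs by simp
        have sp: "(\<Prod>e\<in>galois_signs (Suc (length [1::complex])). H (Zr e ([1] @ [c])))
           = (\<Prod>e\<in>galois_signs (length [1::complex]). H (Zr e [1] * ww c) * H (Zr e [1] * inverse (ww c)))"
          by (rule snoc_prod) simp
        show ?thesis unfolding u' g' sp by (simp add: G_1 Zr_1)
      qed
      also have "\<dots> = H (ww c)^2" using snoc.prems(1)[OF ww_nz] by (simp add: power2_eq_square)
      also have "\<dots> = (\<Prod>e\<in>galois_signs (length (cs @ [c]) - 1). H (Zr e (take i (cs @ [c]) @ drop (Suc i) (cs @ [c]))))^2"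
        using cs i0 by (simp add: G_1 Zr_def ww_def)
      finally show ?thesis .
    next
      case False
      define R where "R = take i cs @ drop (Suc i) cs"
      have lR: "length R = k - 1" unfolding R_def k_def using ik k_def by simp
      have R1: "length R \<ge> 1" using lR False k1 by simp
      define H' where "H' z = H (z * ww c) * H (z * inverse (ww c))" for z
      have H'inv: "H' (inverse z) = H' z" if "z \<noteq> 0" for z
      proof -
        have a: "H (inverse z * ww c) = H (z * inverse (ww c))"
          using snoc.prems(1)[of "z * inverse (ww c)"] that ww_nz
          by (simp add: field_simps)
        have b: "H (inverse z * inverse (ww c)) = H (z * ww c)"
          using snoc.prems(1)[of "z * ww c"] that ww_nz
          by (simp add: field_simps)
        show ?thesis unfolding H'_def a b by (simp add: mult.commute)
      qed
      have IH: "(\<Prod>e\<in>galois_signs (length cs). H' (Zr e (cs[i:=1])))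
          = (\<Prod>e\<in>galois_signs (length cs - 1). H' (Zr e R))^2"
        unfolding R_def
        by (rule snoc.IH) (use H'inv False k1 ik k_def in auto)
      have "(\<Prod>e\<in>galois_signs (length (cs @ [c])). H (Zr e ((cs @ [c])[i := 1])))
          = (\<Prod>e\<in>galois_signs (length cs). H' (Zr e (cs[i:=1])))"
        unfolding u Gk
        using snoc_prod[of "cs[i:=1]" H c] k1 k_def by (simp add: H'_def)
      also have "\<dots> = (\<Prod>e\<in>galois_signs (length cs - 1). H' (Zr e R))^2" by (rule IH)
      also have "(\<Prod>e\<in>galois_signs (length cs - 1). H' (Zr e R))
          = (\<Prod>e\<in>galois_signs (Suc (length R)). H (Zr e (R @ [c])))"
        using snoc_prod[OF R1, of H c] lR k_def k1 by (simp add: H'_def)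
      moreover have "Suc (length cs - Suc 0) = length cs" using k1 k_def by simp
      ultimately show ?thesis unfolding r R_def[symmetric] using lR k_def k1 by simp
    qed
  qed
qed

lemma C_eq_P_sq:
  assumes "length ys \<ge> 2"
  shows "C ys = (P ys)^2"
proof -
  obtain bs x where ys: "ys = bs @ [x]" using assms by (cases ys rule: rev_cases) auto
  have b1: "length bs \<ge> 1" using assms ys by simp
  then have "bs \<noteq> []" by auto
  have "C ys = (\<Prod>e\<in>galois_signs (Suc (length bs)). ff (Zr e (bs @ [x])) - 1)"
    unfolding C_def ys by (simp add: EC_act_eq G_sg cong: prod.cong)
  also have "\<dots> = (\<Prod>e\<in>galois_signs (length bs). (ff (ww x) - ff (Zr e bs))^2)"
    unfolding snoc_prod[OF b1, of "\<lambda>z. ff z - 1" x]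
    by (rule prod.cong) (simp_all add: key_id Zr_nz G_sg ww_nz)
  also have "\<dots> = (\<Prod>e\<in>galois_signs (length bs). x - ff (Zr e bs))^2"
    by (simp add: prod_power_distrib ff_ww)
  also have "\<dots> = (P ys)^2"
    unfolding P_def ys using b1 \<open>bs \<noteq> []\<close> by (simp add: EC_act_eq G_sg cong: prod.cong)
  finally show ?thesis .
qed

theorem mainTheorem5:
  fixes xs :: "complex list" and i :: nat
  assumes "length xs \<ge> 3" and "i < length xs"
  shows "P (xs[i := 1]) = C (take i xs @ drop (Suc i) xs)
       \<and> C (take i xs @ drop (Suc i) xs) = (P (take i xs @ drop (Suc i) xs))^2"
proof -
  define ys where "ys = take i xs @ drop (Suc i) xs"
  have ly: "length ys \<ge> 2" using assms unfolding ys_def by simp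
  have CP: "C ys = (P ys)^2" by (rule C_eq_P_sq[OF ly])
  obtain bs x where xs: "xs = bs @ [x]" using assms by (cases xs rule: rev_cases) auto
  have lb: "length bs \<ge> 2" using assms xs by simp
  then have "bs \<noteq> []" by auto
  have "P (xs[i := 1]) = C ys"
  proof (cases "i = length bs")
    case True
    have u: "xs[i:=1] = bs @ [1]" using True xs by simp
    have y: "ys = bs" using True xs unfolding ys_def by simp
    define k where "k = length bs - 1"
    have k1: "k \<ge> 1" and kb: "length bs = Suc k" using lb unfolding k_def by auto
    have "P (xs[i := 1]) = (\<Prod>e\<in>galois_signs (Suc k). 1 - EC_act e bs)"
      unfolding u P_def using kb by simp
    also have "\<dots> = (\<Prod>e\<in>galois_signs (Suc k). EC_act e bs - 1)"
      unfolding G_prod_split[OF k1] by (rule prod.cong) (simp_all add: algebra_simps)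
    also have "\<dots> = C ys" unfolding y C_def kb ..
    finally show ?thesis .
  next
    case False
    then have ib: "i < length bs" using assms xs by simp
    have u: "xs[i:=1] = bs[i:=1] @ [x]" using ib xs by (simp add: list_update_append)
    define R where "R = take i bs @ drop (Suc i) bs"
    have y: "ys = R @ [x]" using ib xs unfolding ys_def R_def by simp
    have lR: "length R = length bs - 1" unfolding R_def using ib by simp
    define H where "H z = x - ff z" for z
    have Hinv: "H (inverse z) = H z" for z unfolding H_def ff_def by (simp add: add.commute)
    have "P (xs[i := 1]) = (\<Prod>e\<in>galois_signs (length bs). H (Zr e (bs[i:=1])))"
      unfolding u P_def H_def using lb \<open>bs \<noteq> []\<close> by (simp add: EC_act_eq G_sg cong: prod.cong)
    also have "\<dots> = (\<Prod>e\<in>galois_signs (length bs - 1). H (Zr e R))^2"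
      unfolding R_def by (rule remove_lemma) (use Hinv lb ib in auto)
    also have "\<dots> = (P ys)^2"
      unfolding y P_def H_def using lR lb by (simp add: EC_act_eq G_sg cong: prod.cong)
    finally show ?thesis using CP by simp
  qed
  then show ?thesis using CP unfolding ys_def by simp
qed

end
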